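(* Let $D$ be a non-commutative division ring with center $F$. If $M$ is an irreducible locally solvable maximal subgroup of $D^*$, then its derived subgroup $M'$ is not contained in $F$.
   Context: $D^*$ is the multiplicative group of $D$; maximal subgroup = proper subgroup maximal among proper subgroups. A subgroup $G\le D^*$ is irreducible if the division subring $F(G)$ generated by $F\cup G$ equals $D$. Locally solvable: every finitely generated subgroup solvable. *)

theory Defs
  imports "HOL-Algebra.Solvable_Groups"
begin

definition mult_grp :: "('a::division_ring) monoid" where
  "mult_grp = \<lparr>carrier = UNIV - {0}, mult = (*), one = 1\<rparr>"

definition center :: "('a::division_ring) set" where
  "center = {z. \<forall>x. z * x = x * z}"

definition div_subring :: "('a::division_ring) set \<Rightarrow> bool" where
  "div_subring S \<longleftrightarrow> 0 \<in> S \<and> 1 \<in> S \<and>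
     (\<forall>x\<in>S. \<forall>y\<in>S. x + y \<in> S \<and> x * y \<in> S) \<and>
     (\<forall>x\<in>S. - x \<in> S) \<and> (\<forall>x\<in>S. x \<noteq> 0 \<longrightarrow> inverse x \<in> S)"

definition div_subring_gen :: "('a::division_ring) set \<Rightarrow> 'a set" where
  "div_subring_gen A = \<Inter>{S. div_subring S \<and> A \<subseteq> S}"

definition maximal_subgroup :: "('a::division_ring) set \<Rightarrow> bool" where
  "maximal_subgroup M \<longleftrightarrow> subgroup M mult_grp \<and> M \<noteq> carrier mult_grp \<and>
     (\<forall>H. subgroup H mult_grp \<and> M \<subseteq> H \<longrightarrow> H = M \<or> H = carrier mult_grp)"

definition irreducible_subgroup :: "('a::division_ring) set \<Rightarrow> bool" where
  "irreducible_subgroup G \<longleftrightarrow> subgroup G mult_grp \<and> div_subring_gen (center \<union> G) = UNIV"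

definition locally_solvable :: "('a::division_ring) set \<Rightarrow> bool" where
  "locally_solvable G \<longleftrightarrow> (\<forall>S. finite S \<and> S \<subseteq> G \<longrightarrow> solvable (subgroup_generated mult_grp S))"

end

theory Submission
  imports Defs
begin

lemma mg_carrier[simp]: "carrier mult_grp = UNIV - {0}"
  and mg_mult[simp]: "x \<otimes>\<^bsub>mult_grp\<^esub> y = x * y"
  and mg_one[simp]: "\<one>\<^bsub>mult_grp\<^esub> = 1"
  by (simp_all add: mult_grp_def)

lemma mg_inv[simp]: "(x::'a::division_ring) \<noteq> 0 \<Longrightarrow> inv\<^bsub>mult_grp\<^esub> x = inverse x"
  unfolding m_inv_def by (rule the_equality) (auto simp: mult_grp_def intro: inverse_unique[symmetric])

lemma centralizer_div_subring: "div_subring {z::'a::division_ring. z * x = x * z}"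
proof -
  have inv: "inverse z * x = x * inverse z" if "z * x = x * z" "z \<noteq> 0" for z
  proof -
    have "inverse z * x = inverse z * x * (z * inverse z)" using that by simp
    also have "\<dots> = inverse z * (x * z) * inverse z" by (simp add: mult.assoc)
    also have "\<dots> = inverse z * (z * x) * inverse z" using that by simp
    also have "\<dots> = x * inverse z" using that(2) by (simp add: mult.assoc[symmetric])
    finally show ?thesis .
  qed
  have m: "y * z * x = x * (y * z)" if "z * x = x * z" "y * x = x * y" for y z
  proof -
    have "y * z * x = y * (z * x)" by (simp add: mult.assoc)
    also have "\<dots> = y * (x * z)" using that(1) by simp
    also have "\<dots> = (y * x) * z" by (simp only: mult.assoc)
    also have "\<dots> = x * (y * z)" using that by (simp add: mult.assoc)
    finally show ?thesis .
  qed
  show ?thesis unfolding div_subring_def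
    by (auto simp: distrib_left distrib_right inv m)
qed

lemma center_eq: "center = (\<Inter>x. {z::'a::division_ring. z * x = x * z})"
  unfolding center_def by auto

lemma div_subring_Inter:
  assumes "\<And>i. div_subring (S i :: 'a::division_ring set)"
  shows "div_subring (\<Inter>i. S i)"
proof -
  have h: "0 \<in> S i" "1 \<in> S i"
    "x \<in> S i \<Longrightarrow> y \<in> S i \<Longrightarrow> x + y \<in> S i"
    "x \<in> S i \<Longrightarrow> y \<in> S i \<Longrightarrow> x * y \<in> S i"
    "x \<in> S i \<Longrightarrow> - x \<in> S i"
    "x \<in> S i \<Longrightarrow> x \<noteq> 0 \<Longrightarrow> inverse x \<in> S i" for i x y
    using assms[of i] unfolding div_subring_def by auto
  show ?thesis unfolding div_subring_def by (simp add: h)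
qed

lemma center_div_subring: "div_subring (center :: 'a::division_ring set)"
  unfolding center_eq by (rule div_subring_Inter) (rule centralizer_div_subring)

lemma center_mult: "a \<in> center \<Longrightarrow> a * x = x * a"
  by (simp add: center_def)

lemma gen_sub: "div_subring S \<Longrightarrow> A \<subseteq> S \<Longrightarrow> div_subring_gen A \<subseteq> S"
  unfolding div_subring_gen_def by auto

lemma center_ops:
  "a \<in> center \<Longrightarrow> b \<in> center \<Longrightarrow> a * b \<in> center"
  "a \<in> center \<Longrightarrow> b \<in> center \<Longrightarrow> a - b \<in> center"
  "a \<in> center \<Longrightarrow> inverse (a::'a::division_ring) \<in> center"
  "(1::'a) \<in> center"
proof -
  have d: "div_subring (center :: 'a set)" by (rule center_div_subring)
  show "a \<in> center \<Longrightarrow> b \<in> center \<Longrightarrow> a * b \<in> center" using d unfolding div_subring_def by blast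
  show "a \<in> center \<Longrightarrow> b \<in> center \<Longrightarrow> a - b \<in> center"
  proof -
    assume "a \<in> center" "b \<in> center"
    hence "a + - b \<in> center" using d unfolding div_subring_def by blast
    thus ?thesis by (simp only: diff_conv_add_uminus)
  qed
  show "a \<in> center \<Longrightarrow> inverse (a::'a::division_ring) \<in> center"
    using d unfolding div_subring_def by (cases "a = 0") auto
  show "(1::'a) \<in> center" using d unfolding div_subring_def by blast
qed

lemma comm_trick:
  fixes x y f g :: "'a::division_ring"
  assumes f: "f \<in> center" and g: "g \<in> center" and xnc: "x \<notin> center"
    and e1: "y * x = f * x * y" and e2: "y * (1 + x) = g * (1 + x) * y" and y0: "y \<noteq> 0"
  shows "y * x = x * y"
proof -
  have "y + f * x * y = g * y + g * x * y" using e1 e2 by (simp add: algebra_simps)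
  hence "(1 - g) * y = (g - f) * x * y" by (simp add: algebra_simps)
  hence h: "1 - g = (g - f) * x" using y0 by simp
  show ?thesis
  proof (cases "g = f")
    case True
    then have "f = 1" using h by simp
    then show ?thesis using e1 by simp
  next
    case False
    have "inverse (g - f) * (1 - g) \<in> center"
      using center_ops(1)[OF center_ops(3)[OF center_ops(2)[OF g f]] center_ops(2)[OF center_ops(4) g]] .
    moreover have "inverse (g - f) * (1 - g) = x" using h False by (simp add: mult.assoc[symmetric])
    ultimately show ?thesis using xnc by simp
  qed
qed

lemma N_trick:
  fixes x u a b :: "'a::division_ring"
  assumes a: "a \<in> center" and b: "b \<in> center" and x0: "x \<noteq> 0"
    and e1: "u * x = a * x * u" and e2: "(u + 1) * x = b * x * (u + 1)"
  shows "u * x = x * u"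
proof -
  have "a * x * u + x = b * x * u + b * x" using e1 e2 by (simp add: algebra_simps)
  hence h: "(a - b) * x * u = (b - 1) * x" by (simp add: algebra_simps)
  show ?thesis
  proof (cases "a = b")
    case True
    then have "(b - 1) * x = 0" using h by simp
    then have "b = 1" using x0 by simp
    then show ?thesis using e1 True by simp
  next
    case False
    have ab: "a - b \<in> center" "b - 1 \<in> center" using a b center_ops by auto
    have c1: "(a - b) * x = x * (a - b)" and c2: "(b - 1) * x = x * (b - 1)"
      using ab by (simp_all add: center_def)
    have "x * ((a - b) * u) = (a - b) * x * u" by (simp only: c1 mult.assoc)
    also have "\<dots> = (b - 1) * x" by (rule h)
    also have "\<dots> = x * (b - 1)" by (rule c2)
    finally have "x * ((a - b) * u) = x * (b - 1)" .
    hence "(a - b) * u = b - 1" using x0 by simp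
    moreover have "inverse (a - b) * ((a - b) * u) = u" using False by (simp add: mult.assoc[symmetric])
    ultimately have "u = inverse (a - b) * (b - 1)" by simp
    moreover have "inverse (a - b) * (b - 1) \<in> center" using ab center_ops by blast
    ultimately show ?thesis by (simp add: center_def)
  qed
qed

theorem lemma2p6:
  fixes M :: "('a::division_ring) set"
  assumes "\<exists>x y :: 'a. x * y \<noteq> y * x"
    and "maximal_subgroup M"
    and "irreducible_subgroup M"
    and "locally_solvable M"
  shows "\<not> derived mult_grp M \<subseteq> center"
proof
  assume der: "derived mult_grp M \<subseteq> center"
  have sgM: "subgroup M mult_grp" and max: "\<And>H. subgroup H mult_grp \<Longrightarrow> M \<subseteq> H \<Longrightarrow> H = M \<or> H = carrier mult_grp"
    and Mne: "M \<noteq> carrier mult_grp"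
    using assms(2) unfolding maximal_subgroup_def by auto
  have gen: "div_subring_gen (center \<union> M) = UNIV" using assms(3) unfolding irreducible_subgroup_def by auto
  have M0: "y \<in> M \<Longrightarrow> y \<noteq> 0" for y using subgroup.subset[OF sgM] by auto
  have comm: "\<exists>f\<in>center. y * z = f * z * y" if y: "y \<in> M" and z: "z \<in> M" for y z
  proof -
    have "y \<otimes>\<^bsub>mult_grp\<^esub> z \<otimes>\<^bsub>mult_grp\<^esub> inv\<^bsub>mult_grp\<^esub> y \<otimes>\<^bsub>mult_grp\<^esub> inv\<^bsub>mult_grp\<^esub> z \<in> derived mult_grp M"
      unfolding derived_def using y z by (intro generate.incl) blast
    hence f: "y * z * inverse y * inverse z \<in> center" using der M0[OF y] M0[OF z] by auto
    have "(y * z * inverse y * inverse z) * z * y = y * z"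
      using M0[OF y] M0[OF z] by (simp add: mult.assoc)
    thus ?thesis using f by metis
  qed
  have "\<exists>x\<in>M. x \<notin> center"
  proof (rule ccontr)
    assume "\<not> (\<exists>x\<in>M. x \<notin> center)"
    hence "center \<union> M \<subseteq> center" by auto
    hence "div_subring_gen (center \<union> M) \<subseteq> center" using gen_sub center_div_subring by blast
    hence "UNIV \<subseteq> (center :: 'a set)" using gen by simp
    thus False using assms(1) unfolding center_def by auto
  qed
  then obtain x where xM: "x \<in> M" and xnc: "x \<notin> center" by blast
  have x0: "x \<noteq> 0" using M0 xM by blast
  define N where "N = {u::'a. u \<noteq> 0 \<and> (\<exists>a\<in>center. u * x = a * x * u)}"
  have sgN: "subgroup N mult_grp"
  proof
    show "N \<subseteq> carrier mult_grp" unfolding N_def by auto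
    show "\<one>\<^bsub>mult_grp\<^esub> \<in> N" unfolding N_def using center_ops(4) by force
  next
    fix u v assume u: "u \<in> N" and v: "v \<in> N"
    then obtain a b where a: "a \<in> center" "u * x = a * x * u" and b: "b \<in> center" "v * x = b * x * v"
      and u0: "u \<noteq> 0" and v0: "v \<noteq> 0" unfolding N_def by auto
    have "u * v * x = u * (b * x * v)" using b by (simp add: mult.assoc)
    also have "\<dots> = (u * b) * x * v" by (simp only: mult.assoc)
    also have "\<dots> = (b * u) * x * v" by (simp only: center_mult[OF b(1), of u])
    also have "\<dots> = b * (u * x) * v" by (simp only: mult.assoc)
    also have "\<dots> = (b * a) * x * (u * v)" using a by (simp add: mult.assoc)
    finally show "u \<otimes>\<^bsub>mult_grp\<^esub> v \<in> N" unfolding N_def using u0 v0 center_ops(1)[OF b(1) a(1)] by auto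
  next
    fix u assume u: "u \<in> N"
    then obtain a where a: "a \<in> center" "u * x = a * x * u" and u0: "u \<noteq> 0" unfolding N_def by auto
    have a0: "a \<noteq> 0" using a(2) u0 x0 by auto
    have e: "inverse u * (u * x) = x" using u0 by (simp add: mult.assoc[symmetric])
    have "x * inverse u = inverse u * (u * x) * inverse u" using e by simp
    also have "\<dots> = inverse u * (a * x * u) * inverse u" using a(2) by simp
    also have "\<dots> = inverse u * (a * x) * (u * inverse u)" by (simp only: mult.assoc)
    also have "\<dots> = inverse u * (a * x)" using u0 by simp
    also have "\<dots> = (inverse u * a) * x" by (simp only: mult.assoc)
    also have "\<dots> = (a * inverse u) * x" by (simp only: center_mult[OF a(1)])
    finally have xi: "x * inverse u = a * (inverse u * x)" by (simp only: mult.assoc)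
    have "inverse a * x * inverse u = inverse a * (a * (inverse u * x))" using xi by (simp add: mult.assoc)
    also have "\<dots> = inverse u * x" using a0 by (simp add: mult.assoc[symmetric])
    finally have "inverse a * x * inverse u = inverse u * x" .
    hence "inverse u * x = inverse a * x * inverse u" by simp
    thus "inv\<^bsub>mult_grp\<^esub> u \<in> N" unfolding N_def using u0 center_ops(3)[OF a(1)] by auto
  qed
  have MN: "M \<subseteq> N"
  proof
    fix y assume y: "y \<in> M"
    then obtain f where "f \<in> center" "y * x = f * x * y" using comm xM by blast
    thus "y \<in> N" unfolding N_def using M0[OF y] by auto
  qed
  have Nne: "N \<noteq> carrier mult_grp"
  proof
    assume Nc: "N = carrier mult_grp"
    obtain w where w: "x * w \<noteq> w * x" using xnc unfolding center_def by auto
    have w0: "w \<noteq> 0" using w by auto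
    have w1: "w + 1 \<noteq> 0"
    proof
      assume "w + 1 = 0" hence "w = -1" by (simp add: eq_neg_iff_add_eq_0)
      thus False using w by simp
    qed
    have "w \<in> N" "w + 1 \<in> N" using Nc w0 w1 by auto
    then obtain a b where "a \<in> center" "w * x = a * x * w" "b \<in> center" "(w + 1) * x = b * x * (w + 1)"
      unfolding N_def by auto
    hence "w * x = x * w" using N_trick x0 by blast
    thus False using w by simp
  qed
  have NM: "N = M" using max[OF sgN MN] Nne by blast
  have x1: "1 + x \<noteq> 0"
  proof
    assume "1 + x = 0" hence "x = -1" by (simp add: eq_neg_iff_add_eq_0 add.commute)
    thus False using xnc center_div_subring center_ops(4) unfolding div_subring_def by blast
  qed
  have "1 + x \<in> N" unfolding N_def using x1 center_ops(4) by (force simp: algebra_simps)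
  hence x1M: "1 + x \<in> M" using NM by simp
  have xc: "y * x = x * y" if y: "y \<in> M" for y
  proof -
    obtain f where f: "f \<in> center" "y * x = f * x * y" using comm[OF y xM] by blast
    obtain g where g: "g \<in> center" "y * (1 + x) = g * (1 + x) * y" using comm[OF y x1M] by blast
    show ?thesis using comm_trick[OF f(1) g(1) xnc f(2) g(2) M0[OF y]] .
  qed
  have "center \<union> M \<subseteq> {z. z * x = x * z}" using xc center_mult by auto
  hence "div_subring_gen (center \<union> M) \<subseteq> {z. z * x = x * z}"
    using gen_sub centralizer_div_subring by blast
  hence "\<forall>z. z * x = x * z" using gen by auto
  thus False using xnc unfolding center_def by auto
qed

end
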